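(* Let $\delta\ge0$, let $\rho\in D_\delta$ and let $\sigma\in[0,1+\delta)$. Then there is $C$ such that $E_{n,\sigma}\le C\Delta_n^{\sigma/(1+\delta)}$ for all $n\ge0$.
   Context: An irrational $\rho$ is in $D_\delta$ if there is $C>0$ with $|\rho-p/q|\ge Cq^{-2-\delta}$ for all rationals $p/q$. Write $\rho\in(0,1)$ as a continued fraction $\rho=[k_1,k_2,\dots]$ with convergents $p_n/q_n$, where $p_0=0,q_0=1,p_{-1}=1,q_{-1}=0$, $p_n=k_np_{n-1}+p_{n-2}$, $q_n=k_nq_{n-1}+q_{n-2}$. Set $\Delta_n=|q_n\rho-p_n|$ for $n\ge-1$ (so $\Delta_{-1}=1$), and $E_{n,\sigma}=\sum_{k=0}^n\frac{\Delta_n}{\Delta_{n-k}}\Delta_{n-k-1}^\sigma$. *)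

theory Defs
  imports Complex_Main
begin

definition D_class :: "real \<Rightarrow> real set" where
  "D_class \<delta> = {\<rho>. \<rho> \<notin> \<rat> \<and> (\<exists>C>0. \<forall>p q::int. q \<ge> 1 \<longrightarrow>
      \<bar>\<rho> - real_of_int p / real_of_int q\<bar> \<ge> C * (real_of_int q) powr (-2 - \<delta>))}"

fun cf_rem :: "real \<Rightarrow> nat \<Rightarrow> real" where
  "cf_rem \<rho> 0 = \<rho>"
| "cf_rem \<rho> (Suc m) = frac (1 / cf_rem \<rho> m)"

text \<open>Partial quotients k_m (m >= 1): rho = [k_1, k_2, ...].\<close>
definition cf_k :: "real \<Rightarrow> nat \<Rightarrow> int" where
  "cf_k \<rho> m = \<lfloor>1 / cf_rem \<rho> (m - 1)\<rfloor>"

text \<open>Shifted numerators/denominators: cf_pp rho j = p_(j-1), cf_qq rho j = q_(j-1).\<close>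
fun cf_pp :: "real \<Rightarrow> nat \<Rightarrow> int" where
  "cf_pp \<rho> 0 = 1"
| "cf_pp \<rho> (Suc 0) = 0"
| "cf_pp \<rho> (Suc (Suc m)) = cf_k \<rho> (Suc m) * cf_pp \<rho> (Suc m) + cf_pp \<rho> m"

fun cf_qq :: "real \<Rightarrow> nat \<Rightarrow> int" where
  "cf_qq \<rho> 0 = 0"
| "cf_qq \<rho> (Suc 0) = 1"
| "cf_qq \<rho> (Suc (Suc m)) = cf_k \<rho> (Suc m) * cf_qq \<rho> (Suc m) + cf_qq \<rho> m"

definition cf_p :: "real \<Rightarrow> int \<Rightarrow> int" where
  "cf_p \<rho> n = cf_pp \<rho> (nat (n + 1))"

definition cf_q :: "real \<Rightarrow> int \<Rightarrow> int" where
  "cf_q \<rho> n = cf_qq \<rho> (nat (n + 1))"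

definition cf_Delta :: "real \<Rightarrow> int \<Rightarrow> real" where
  "cf_Delta \<rho> n = \<bar>real_of_int (cf_q \<rho> n) * \<rho> - real_of_int (cf_p \<rho> n)\<bar>"

definition cf_E :: "real \<Rightarrow> real \<Rightarrow> nat \<Rightarrow> real" where
  "cf_E \<rho> \<sigma> n = (\<Sum>k\<in>{0..n}.
      cf_Delta \<rho> (int n) / cf_Delta \<rho> (int n - int k)
      * cf_Delta \<rho> (int n - int k - 1) powr \<sigma>)"

end

theory Submission
  imports Defs
begin

definition cfP :: "real \<Rightarrow> nat \<Rightarrow> real" where
  "cfP \<rho> j = (\<Prod>i<j. cf_rem \<rho> i)"

lemma cfP_0[simp]: "cfP \<rho> 0 = 1" by (simp add: cfP_def)
lemma cfP_Suc: "cfP \<rho> (Suc j) = cfP \<rho> j * cf_rem \<rho> j" by (simp add: cfP_def)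

lemma rem_props:
  assumes "\<rho> \<notin> \<rat>" "0 < \<rho>" "\<rho> < 1"
  shows "cf_rem \<rho> m \<notin> \<rat> \<and> 0 < cf_rem \<rho> m \<and> cf_rem \<rho> m < 1"
proof (induction m)
  case 0 thus ?case using assms by simp
next
  case (Suc m)
  define x where "x = cf_rem \<rho> m"
  have x: "x \<notin> \<rat>" "0 < x" "x < 1" using Suc x_def by auto
  have nq1: "1/x \<notin> \<rat>"
  proof
    assume "1/x \<in> \<rat>"
    then have "inverse (1/x) \<in> \<rat>" by (rule Rats_inverse)
    thus False using x by simp
  qed
  have nq: "frac (1/x) \<notin> \<rat>"
  proof
    assume "frac (1/x) \<in> \<rat>"
    then have "frac (1/x) + of_int \<lfloor>1/x\<rfloor> \<in> \<rat>" by (intro Rats_add) auto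
    thus False using nq1 by (simp add: frac_def)
  qed
  have "frac (1/x) \<noteq> 0" using nq by (metis Rats_0)
  then have "0 < frac (1/x)" using frac_ge_0[of "1/x"] by linarith
  thus ?case using nq frac_lt_1[of "1/x"] by (simp add: x_def)
qed

lemma half:
  fixes x :: real
  assumes "0 < x" "x < 1"
  shows "x * frac (1/x) \<le> 1/2"
proof (cases "x \<le> 1/2")
  case True
  have "x * frac (1/x) \<le> x * 1" using frac_lt_1[of "1/x"] assms
    by (intro mult_left_mono) auto
  thus ?thesis using True by simp
next
  case False
  have a: "1 < 1/x" using assms by simp
  have b: "1/x < 2" using False assms by (simp add: field_simps)
  have "\<lfloor>1/x\<rfloor> = 1" using a b by (simp add: floor_eq_iff)
  then have "frac (1/x) = 1/x - 1" by (simp add: frac_def)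
  then have "x * frac (1/x) = 1 - x" using assms by (simp add: field_simps)
  thus ?thesis using False by simp
qed

context
  fixes \<rho> :: real
  assumes pos: "\<And>m. 0 < cf_rem \<rho> m" and lt1: "\<And>m. cf_rem \<rho> m < 1"
begin

lemma remSuc: "cf_rem \<rho> (Suc j) = 1 / cf_rem \<rho> j - of_int (cf_k \<rho> (Suc j))"
  by (simp add: cf_k_def frac_def)

lemma k_ge1: "cf_k \<rho> (Suc j) \<ge> 1"
proof -
  have "1 \<le> 1 / cf_rem \<rho> j" using pos[of j] lt1[of j] by simp
  thus ?thesis by (simp add: cf_k_def)
qed

lemma cfP_pos: "0 < cfP \<rho> j"
  unfolding cfP_def using pos by (simp add: prod_pos)

lemma sign: "real_of_int (cf_qq \<rho> j) * \<rho> - cf_pp \<rho> j = (-1)^(j+1) * cfP \<rho> j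
  \<and> real_of_int (cf_qq \<rho> (Suc j)) * \<rho> - cf_pp \<rho> (Suc j) = (-1)^(j+2) * cfP \<rho> (Suc j)"
proof (induction j)
  case 0 thus ?case by (simp add: cfP_Suc)
next
  case (Suc j)
  define x where "x = cf_rem \<rho> j"
  define k where "k = real_of_int (cf_k \<rho> (Suc j))"
  have x0: "x \<noteq> 0" using pos[of j] x_def by simp
  have e: "real_of_int (cf_qq \<rho> (Suc (Suc j))) * \<rho> - cf_pp \<rho> (Suc (Suc j))
     = k * (real_of_int (cf_qq \<rho> (Suc j)) * \<rho> - cf_pp \<rho> (Suc j))
       + (real_of_int (cf_qq \<rho> j) * \<rho> - cf_pp \<rho> j)"
    by (simp add: k_def algebra_simps)
  have P2: "cfP \<rho> (Suc (Suc j)) = cfP \<rho> j * x * (1/x - k)"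
    by (simp add: cfP_Suc remSuc x_def k_def del: cf_rem.simps)
  have P1: "cfP \<rho> (Suc j) = cfP \<rho> j * x" by (simp add: cfP_Suc x_def)
  have "real_of_int (cf_qq \<rho> (Suc (Suc j))) * \<rho> - cf_pp \<rho> (Suc (Suc j))
      = (-1)^(Suc j+2) * cfP \<rho> (Suc (Suc j))"
  proof -
    define s where "s = ((-1::real)^j)"
    have I1: "real_of_int (cf_qq \<rho> j) * \<rho> - cf_pp \<rho> j = - s * cfP \<rho> j"
      using Suc.IH s_def by simp
    have I2: "real_of_int (cf_qq \<rho> (Suc j)) * \<rho> - cf_pp \<rho> (Suc j) = s * (cfP \<rho> j * x)"
      using Suc.IH s_def P1 by simp
    have "(-1::real)^(Suc j+2) = - s" by (simp add: s_def)
    then show ?thesis unfolding e I1 I2 P2 using x0 by (simp add: field_simps)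
  qed
  thus ?case using Suc.IH by simp
qed

lemma Delta_eq: "cf_Delta \<rho> (int j - 1) = cfP \<rho> j"
proof -
  have "nat (int j - 1 + 1) = j" by simp
  then have "cf_Delta \<rho> (int j - 1) = \<bar>(-1)^(j+1) * cfP \<rho> j\<bar>"
    unfolding cf_Delta_def cf_q_def cf_p_def using sign[of j] by simp
  thus ?thesis using cfP_pos[of j] by (simp add: abs_mult)
qed

lemma T_id: "real_of_int (cf_qq \<rho> (Suc j)) * cfP \<rho> j + real_of_int (cf_qq \<rho> j) * cfP \<rho> (Suc j) = 1"
proof (induction j)
  case 0 thus ?case by simp
next
  case (Suc j)
  define x where "x = cf_rem \<rho> j"
  define k where "k = real_of_int (cf_k \<rho> (Suc j))"
  have x0: "x \<noteq> 0" using pos[of j] x_def by simp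
  have P2: "cfP \<rho> (Suc (Suc j)) = cfP \<rho> j * x * (1/x - k)"
    by (simp add: cfP_Suc remSuc x_def k_def del: cf_rem.simps)
  have P1: "cfP \<rho> (Suc j) = cfP \<rho> j * x" by (simp add: cfP_Suc x_def)
  have q: "real_of_int (cf_qq \<rho> (Suc (Suc j))) = k * cf_qq \<rho> (Suc j) + cf_qq \<rho> j"
    by (simp add: k_def)
  show ?case unfolding q P2 using Suc.IH P1 x0 by (simp add: field_simps)
qed

lemma qq_pos: "cf_qq \<rho> j \<ge> 0 \<and> cf_qq \<rho> (Suc j) \<ge> 1"
proof (induction j)
  case 0 thus ?case by simp
next
  case (Suc j)
  have "cf_k \<rho> (Suc j) * cf_qq \<rho> (Suc j) \<ge> 1 * 1"
    using k_ge1[of j] Suc.IH by (intro mult_mono) auto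
  thus ?case using Suc.IH by simp
qed

lemma qq_le: "real_of_int (cf_qq \<rho> (Suc j)) * cfP \<rho> j \<le> 1"
proof -
  have "0 \<le> real_of_int (cf_qq \<rho> j) * cfP \<rho> (Suc j)"
    using qq_pos[of j] cfP_pos[of "Suc j"] by simp
  thus ?thesis using T_id[of j] by linarith
qed

lemma decay2: "cfP \<rho> (Suc (Suc j)) \<le> cfP \<rho> j / 2"
proof -
  have "cfP \<rho> (Suc (Suc j)) = cfP \<rho> j * (cf_rem \<rho> j * frac (1 / cf_rem \<rho> j))"
    by (simp add: cfP_Suc)
  also have "\<dots> \<le> cfP \<rho> j * (1/2)"
    using half[OF pos[of j] lt1[of j]] cfP_pos[of j] by (intro mult_left_mono) auto
  finally show ?thesis by simp
qed

lemma decay: "cfP \<rho> (s + d) \<le> sqrt 2 * (1 / sqrt 2)^d * cfP \<rho> s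
  \<and> cfP \<rho> (s + Suc d) \<le> sqrt 2 * (1 / sqrt 2)^(Suc d) * cfP \<rho> s"
proof (induction d)
  case 0
  have a: "1 \<le> sqrt (2::real)" by simp
  have "cfP \<rho> s \<le> sqrt 2 * cfP \<rho> s" using cfP_pos[of s] a
    by (simp add: mult_le_cancel_right1 less_imp_le)
  moreover have "cfP \<rho> (Suc s) \<le> cfP \<rho> s"
    using cfP_pos[of s] lt1[of s] by (simp add: cfP_Suc mult_left_le)
  ultimately show ?case by simp
next
  case (Suc d)
  have "cfP \<rho> (s + Suc (Suc d)) \<le> cfP \<rho> (s + d) / 2"
    using decay2[of "s+d"] by simp
  also have "\<dots> \<le> sqrt 2 * (1 / sqrt 2)^d * cfP \<rho> s / 2" using Suc.IH by simp
  also have "\<dots> = sqrt 2 * (1 / sqrt 2)^(Suc (Suc d)) * cfP \<rho> s"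
    by (simp add: power2_eq_square[symmetric])
  finally show ?case using Suc.IH by simp
qed

end


theorem lemma7:
  fixes \<delta> \<rho> \<sigma> :: real
  assumes "\<delta> \<ge> 0"
    and "0 < \<rho>" and "\<rho> < 1"
    and "\<rho> \<in> D_class \<delta>"
    and "0 \<le> \<sigma>" and "\<sigma> < 1 + \<delta>"
  shows "\<exists>C. \<forall>n::nat. cf_E \<rho> \<sigma> n \<le> C * cf_Delta \<rho> (int n) powr (\<sigma> / (1 + \<delta>))"
proof -
  have irr: "\<rho> \<notin> \<rat>" using assms(4) by (simp add: D_class_def)
  obtain C where C: "C > 0" and dio: "\<And>p q::int. q \<ge> 1 \<Longrightarrow>
      \<bar>\<rho> - real_of_int p / real_of_int q\<bar> \<ge> C * (real_of_int q) powr (-2 - \<delta>)"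
    using assms(4) by (auto simp: D_class_def)
  have pos: "\<And>m. 0 < cf_rem \<rho> m" using rem_props[OF irr assms(2,3)] by blast
  have lt1: "\<And>m. cf_rem \<rho> m < 1" using rem_props[OF irr assms(2,3)] by blast
  note Ppos = cfP_pos[OF pos lt1]
  define a where "a = \<sigma> / (1 + \<delta>)"
  define b where "b = 1 - a"
  have a0: "0 \<le> a" using assms by (simp add: a_def)
  have a1: "a < 1" using assms by (simp add: a_def)
  have b0: "0 < b" using a1 by (simp add: b_def)
  have dioP: "cfP \<rho> j \<ge> C * real_of_int (cf_qq \<rho> j) powr (-1 - \<delta>)" if j1: "j \<ge> 1" for j
  proof -
    obtain i where i: "j = Suc i" using j1 by (cases j) auto
    define q where "q = real_of_int (cf_qq \<rho> j)"
    have q1: "q \<ge> 1" using qq_pos[OF pos lt1, of i] by (simp add: q_def i)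
    have "cfP \<rho> j = \<bar>q * \<rho> - cf_pp \<rho> j\<bar>"
      using sign[OF pos lt1, of j] Ppos[of j] by (simp add: q_def abs_mult)
    also have "\<dots> = q * \<bar>\<rho> - cf_pp \<rho> j / q\<bar>"
      using q1 by (simp add: abs_mult[symmetric] field_simps)
    also have "\<dots> \<ge> q * (C * q powr (-2 - \<delta>))"
      using dio[of "cf_qq \<rho> j" "cf_pp \<rho> j"] q1 by (intro mult_left_mono) (auto simp: q_def)
    finally have "cfP \<rho> j \<ge> C * (q * q powr (-2 - \<delta>))" by (simp add: algebra_simps)
    moreover have "q * q powr (-2 - \<delta>) = q powr (-1 - \<delta>)"
      using q1 powr_mult_base[of q "-2 - \<delta>"] by simp
    ultimately show ?thesis by (simp add: q_def)
  qed
  have step: "cfP \<rho> i powr \<sigma> \<le> C powr (-a) * cfP \<rho> (Suc i) powr a" for i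
  proof -
    have qle: "real_of_int (cf_qq \<rho> (Suc i)) \<le> 1 / cfP \<rho> i"
      using qq_le[OF pos lt1, of i] Ppos[of i] by (simp add: field_simps)
    have q1: "real_of_int (cf_qq \<rho> (Suc i)) \<ge> 1" using qq_pos[OF pos lt1, of i] by simp
    have "(1 / cfP \<rho> i) powr (-1 - \<delta>) \<le> real_of_int (cf_qq \<rho> (Suc i)) powr (-1 - \<delta>)"
      using qle q1 assms(1) by (intro powr_mono2') auto
    moreover have "(1 / cfP \<rho> i) powr (-1 - \<delta>) = cfP \<rho> i powr (1 + \<delta>)"
      proof -
        have "-1 - \<delta> = -(1 + \<delta>)" by simp
        then have "(1 / cfP \<rho> i) powr (-1 - \<delta>) = (1 / cfP \<rho> i) powr (-(1 + \<delta>))" by simp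
        also have "\<dots> = cfP \<rho> i powr (1 + \<delta>)" unfolding powr_divide powr_minus by simp
        finally show ?thesis .
      qed
    ultimately have "C * cfP \<rho> i powr (1 + \<delta>) \<le> cfP \<rho> (Suc i)"
    proof -
      assume h1: "(1 / cfP \<rho> i) powr (-1 - \<delta>) \<le> real_of_int (cf_qq \<rho> (Suc i)) powr (-1 - \<delta>)"
        and h2: "(1 / cfP \<rho> i) powr (-1 - \<delta>) = cfP \<rho> i powr (1 + \<delta>)"
      have "C * cfP \<rho> i powr (1 + \<delta>) \<le> C * real_of_int (cf_qq \<rho> (Suc i)) powr (-1 - \<delta>)"
        using h1 h2 C by (intro mult_left_mono) auto
      also have "\<dots> \<le> cfP \<rho> (Suc i)" using dioP[of "Suc i"] by simp
      finally show ?thesis .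
    qed
    then have h: "cfP \<rho> i powr (1 + \<delta>) \<le> cfP \<rho> (Suc i) / C" using C by (simp add: field_simps)
    have "cfP \<rho> i powr \<sigma> = (cfP \<rho> i powr (1 + \<delta>)) powr a"
      using assms(1) by (simp add: powr_powr a_def)
    also have "\<dots> \<le> (cfP \<rho> (Suc i) / C) powr a"
      using h a0 by (intro powr_mono2) auto
    also have "\<dots> = C powr (-a) * cfP \<rho> (Suc i) powr a"
      by (simp add: powr_divide powr_minus_divide)
    finally show ?thesis .
  qed
  define r where "r = (1 / sqrt 2) powr b"
  have r0: "0 < r" by (simp add: r_def)
  have r1: "r < 1"
  proof -
    have "(1 / sqrt 2) powr b < 1 powr b" using b0 by (intro powr_less_mono2) auto
    thus ?thesis by (simp add: r_def)
  qed
  define A where "A = C powr (-a) * sqrt 2 powr b"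
  have A0: "A \<ge> 0" by (simp add: A_def)
  show ?thesis
  proof (intro exI allI)
    fix n :: nat
    define Pn where "Pn = cfP \<rho> (Suc n)"
    have Pn0: "Pn > 0" using Ppos by (simp add: Pn_def)
    have termb: "cf_Delta \<rho> (int n) / cf_Delta \<rho> (int n - int k)
      * cf_Delta \<rho> (int n - int k - 1) powr \<sigma> \<le> A * Pn powr a * r^k" if k: "k \<in> {0..n}" for k
    proof -
      define i where "i = n - k"
      define Q where "Q = cfP \<rho> (Suc i)"
      have Q0: "Q > 0" using Ppos by (simp add: Q_def)
      have e1: "cf_Delta \<rho> (int n) = Pn"
        using Delta_eq[OF pos lt1, of "Suc n"] by (simp add: Pn_def)
      have e2: "cf_Delta \<rho> (int n - int k) = Q"
        using Delta_eq[OF pos lt1, of "Suc i"] k by (simp add: Q_def i_def of_nat_diff)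
      have e3: "cf_Delta \<rho> (int n - int k - 1) = cfP \<rho> i"
        using Delta_eq[OF pos lt1, of "i"] k by (simp add: i_def of_nat_diff)
      have dk: "Pn \<le> sqrt 2 * (1 / sqrt 2)^k * Q"
        using conjunct1[OF decay[OF pos lt1, of "Suc i" k]] k
        by (simp add: Pn_def Q_def i_def)
      have dk': "Pn / Q \<le> sqrt 2 * (1 / sqrt 2)^k" using dk Q0 by (simp add: field_simps)
      have pw: "((1 / sqrt 2)^k) powr b = r^k"
      proof -
        have "((1 / sqrt 2)^k) powr b = ((1 / sqrt 2) powr real k) powr b"
          by (simp add: powr_realpow)
        also have "\<dots> = (1 / sqrt 2) powr (real k * b)" by (simp add: powr_powr)
        also have "\<dots> = r^k" unfolding r_def by (subst powr_power) auto
        finally show ?thesis .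
      qed
      have ident: "Pn / Q * Q powr a = Pn powr a * (Pn / Q) powr b"
      proof -
        have p1: "Pn = Pn powr a * Pn powr b"
          using Pn0 by (simp add: powr_add[symmetric] b_def)
        have p2: "Q = Q powr a * Q powr b"
          using Q0 by (simp add: powr_add[symmetric] b_def)
        have qa: "Q powr a > 0" "Q powr b > 0" using Q0 by auto
        have "Pn / Q * Q powr a = Pn powr a * Pn powr b / (Q powr a * Q powr b) * Q powr a"
          using p1 p2 by simp
        also have "\<dots> = Pn powr a * (Pn powr b / Q powr b)" using qa by (simp add: field_simps)
        finally show ?thesis by (simp add: powr_divide)
      qed
      have "cf_Delta \<rho> (int n) / cf_Delta \<rho> (int n - int k)
          * cf_Delta \<rho> (int n - int k - 1) powr \<sigma> = Pn / Q * cfP \<rho> i powr \<sigma>"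
        by (simp add: e1 e2 e3)
      also have "\<dots> \<le> Pn / Q * (C powr (-a) * Q powr a)"
        using step[of i] Pn0 Q0 by (intro mult_left_mono) (auto simp: Q_def)
      also have "\<dots> = C powr (-a) * (Pn powr a * (Pn / Q) powr b)"
      proof -
        have "Pn / Q * (C powr (-a) * Q powr a) = C powr (-a) * (Pn / Q * Q powr a)" by simp
        then show ?thesis by (simp only: ident)
      qed
      also have "\<dots> \<le> C powr (-a) * (Pn powr a * ((sqrt 2 * (1 / sqrt 2)^k) powr b))"
        using dk' Pn0 Q0 b0 by (intro mult_left_mono powr_mono2) auto
      also have "\<dots> = A * Pn powr a * r^k"
        by (simp add: powr_mult pw A_def)
      finally show ?thesis .
    qed
    have "cf_E \<rho> \<sigma> n \<le> (\<Sum>k\<in>{0..n}. A * Pn powr a * r^k)"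
      unfolding cf_E_def by (rule sum_mono) (rule termb)
    also have "\<dots> = A * Pn powr a * (\<Sum>k<Suc n. r^k)"
      by (simp add: sum_distrib_left atLeast0AtMost lessThan_Suc_atMost)
    also have "\<dots> \<le> A * Pn powr a * (1 / (1 - r))"
    proof (intro mult_left_mono)
      have "(\<Sum>k<Suc n. r^k) = (1 - r^Suc n) / (1 - r)" using r1 by (subst sum_gp_strict) simp
      also have "\<dots> \<le> 1 / (1 - r)" using r0 r1 by (intro divide_right_mono) auto
      finally show "(\<Sum>k<Suc n. r^k) \<le> 1 / (1 - r)" .
    qed (use A0 in auto)
    also have "\<dots> = A / (1 - r) * cf_Delta \<rho> (int n) powr (\<sigma> / (1 + \<delta>))"
      using Delta_eq[OF pos lt1, of "Suc n"] by (simp add: Pn_def a_def)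
    finally show "cf_E \<rho> \<sigma> n \<le> A / (1 - r) * cf_Delta \<rho> (int n) powr (\<sigma> / (1 + \<delta>))" .
  qed
qed

end
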